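(* Let $\mu$ be a probability measure on $[0,\infty)$ with $\mu(\{0\})<1$ and let $\alpha\in(0,1)$. Then $$\frac12\Big(m_\alpha(\mu)-\int_{(0,1)}u^\alpha\,\mu(du)\Big)\le -(1-\alpha)\int_{(0,1]}\frac{K_\mu(-x)}{x^{1+\alpha}}\,dx\le c(\mu)\,\alpha^{-1}m_\alpha(\mu),$$ where $c(\mu)=1/\int_{[0,\infty)}\frac{\mu(du)}{1+u}$. Moreover, $m_\alpha(\mu)<\infty$ if and only if $-\int_{(0,1]}\frac{K_\mu(-x)}{x^{1+\alpha}}\,dx<\infty$.
   Context: For $\alpha\ge0$, $m_\alpha(\mu)=\int_{[0,\infty)}x^\alpha\,\mu(dx)\in[0,\infty]$. Define $\psi_\mu(z)=\int_{[0,\infty)}\frac{z\xi}{1-z\xi}\,\mu(d\xi)$ for $z\in\mathbb C\setminus[0,\infty)$ and $K_\mu(z)=\psi_\mu(z)/(1+\psi_\mu(z))$; note $K_\mu(-x)\le0$ for $x>0$. *)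

theory Defs
  imports "HOL-Probability.Probability"
begin

definition moment :: "real measure \<Rightarrow> real \<Rightarrow> ennreal" where
  "moment M a = (\<integral>\<^sup>+ x. ennreal (x powr a) \<partial>M)"

definition psi :: "real measure \<Rightarrow> complex \<Rightarrow> complex" where
  "psi M z = (\<integral> \<xi>. z * complex_of_real \<xi> / (1 - z * complex_of_real \<xi>) \<partial>M)"

definition Kfun :: "real measure \<Rightarrow> complex \<Rightarrow> complex" where
  "Kfun M z = psi M z / (1 + psi M z)"

definition cmu :: "real measure \<Rightarrow> real" where
  "cmu M = 1 / (\<integral> u. 1 / (1 + u) \<partial>M)"

end

theory Submission
  imports Defs
begin


lemma nn_pow0:
  assumes "p > -1" "c \<ge> 0"
  shows "(\<integral>\<^sup>+x. ennreal (x powr p) * indicator {0..c} x \<partial>lborel) = ennreal (c powr (p+1) / (p+1))"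
  by (rule nn_integral_has_integral_lebesgue') (use has_integral_powr_from_0[OF assms] in auto)

lemma nn_powab:
  assumes "0 < a" "a \<le> b" "e \<noteq> -1"
  shows "(\<integral>\<^sup>+x. ennreal (x powr e) * indicator {a..b} x \<partial>lborel) = ennreal (b powr (e+1)/(e+1) - a powr (e+1)/(e+1))"
proof (rule nn_integral_has_integral_lebesgue')
  have d: "((\<lambda>x. x powr (e+1)/(e+1)) has_real_derivative x powr e) (at x within {a..b})" if "x \<in> {a..b}" for x
  proof -
    have "x > 0" using that assms by auto
    have "((\<lambda>x. x powr (e+1)/(e+1)) has_real_derivative ((e+1) * x powr (e+1-1))/(e+1)) (at x within {a..b})"
      using \<open>x > 0\<close> by (auto intro!: derivative_eq_intros)
    then show ?thesis using assms(3) by (simp add: add_eq_0_iff)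
  qed
  show "((\<lambda>x. x powr e) has_integral (b powr (e+1)/(e+1) - a powr (e+1)/(e+1))) {a..b}"
    using assms d
    by (intro fundamental_theorem_of_calculus)
       (auto simp flip: has_real_derivative_iff_has_vector_derivative)
qed auto

definition hh :: "real \<Rightarrow> real \<Rightarrow> real \<Rightarrow> real" where
  "hh a x u = indicator {0<..1} x * (x*u/(1+x*u)) / x powr (1+a)"

lemma hh_eq:
  assumes "0 < x" "x \<le> 1" "u \<ge> 0"
  shows "hh a x u = u * x powr (-a) / (1+x*u)"
proof -
  define P where "P = x powr a"
  have P: "P > 0" using assms by (simp add: P_def)
  have 1: "x powr (1+a) = x * P" using assms by (simp add: powr_add P_def)
  have 2: "x powr (-a) = 1 / P" by (simp add: powr_minus divide_inverse P_def)
  have 3: "1 + x*u > 0" using assms by (simp add: add_pos_nonneg)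
  have "x*u/(1+x*u) / (x * P) = (x*u)/(x*((1+x*u)*P))" by (simp add: mult_ac)
  also have "\<dots> = u/((1+x*u)*P)" using assms by simp
  also have "\<dots> = u * (1/P) / (1+x*u)" by simp
  finally have "x*u/(1+x*u) / (x * P) = u * (1/P) / (1+x*u)" .
  then show ?thesis using assms unfolding hh_def 1 2 by simp
qed

lemma hh_nonneg: "u \<ge> 0 \<Longrightarrow> hh a x u \<ge> 0"
  unfolding hh_def indicator_def by (auto intro!: divide_nonneg_nonneg mult_nonneg_nonneg add_nonneg_nonneg)

lemma G_lower:
  assumes "u \<ge> 1" "0 < a" "a < 1"
  shows "ennreal (u powr a / (2*(1-a))) \<le> (\<integral>\<^sup>+x. ennreal (hh a x u) \<partial>lborel)"
proof -
  have eq: "(\<integral>\<^sup>+x. ennreal (u/2) * (ennreal (x powr (-a)) * indicator {0..1/u} x) \<partial>lborel)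
      = ennreal (u/2) * ennreal ((1/u) powr (-a+1) / (-a+1))"
    using assms by (subst nn_integral_cmult) (auto simp: nn_pow0)
  also have "\<dots> = ennreal (u powr a / (2*(1-a)))"
  proof -
    have "(1/u) powr (-a+1) = u powr (a - 1)" using assms
      by (simp add: powr_divide powr_minus_divide[symmetric] powr_minus) 
    moreover have "u * u powr (a-1) = u powr a" using assms by (simp add: powr_diff)
    ultimately show ?thesis using assms
      by (simp add: ennreal_mult'[symmetric] field_simps)
  qed
  finally have eq2: "(\<integral>\<^sup>+x. ennreal (u/2) * (ennreal (x powr (-a)) * indicator {0..1/u} x) \<partial>lborel) = ennreal (u powr a / (2*(1-a)))" .
  have mono: "(\<integral>\<^sup>+x. ennreal (u/2) * (ennreal (x powr (-a)) * indicator {0..1/u} x) \<partial>lborel)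
      \<le> (\<integral>\<^sup>+x. ennreal (hh a x u) \<partial>lborel)"
  proof (rule nn_integral_mono)
    fix x
    show "ennreal (u/2) * (ennreal (x powr (-a)) * indicator {0..1/u} x) \<le> ennreal (hh a x u)"
    proof (cases "0 < x \<and> x \<le> 1/u")
      case True
      have "1/u \<le> 1" using assms by simp
      then have "x \<le> 1" using True by linarith
      have "x*u \<le> (1/u)*u" using True assms by (intro mult_right_mono) auto
      then have xu: "x*u \<le> 1" using assms by simp
      have "u * x powr (-a) / 2 \<le> u * x powr (-a) / (1+x*u)"
        using True assms xu by (intro divide_left_mono) (auto intro: add_pos_nonneg)
      then have "u/2 * x powr (-a) \<le> u * x powr (-a) / (1+x*u)" by simp
      then show ?thesis using True assms hh_eq[of x u a] \<open>x \<le> 1\<close>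
        by (simp add: ennreal_mult'[symmetric] indicator_def)
    next
      case False
      then show ?thesis by (auto simp: indicator_def)
    qed
  qed
  show ?thesis using eq2 mono by simp
qed

lemma G_upper:
  assumes "u \<ge> 0" "0 < a" "a < 1"
  shows "(\<integral>\<^sup>+x. ennreal (hh a x u) \<partial>lborel) \<le> ennreal (u powr a / (a*(1-a)))"
proof (cases "u = 0")
  case True
  then show ?thesis by (simp add: hh_def)
next
  case False
  then have u: "u > 0" using assms by simp
  show ?thesis
  proof (cases "u \<le> 1")
    case True
    have mono: "(\<integral>\<^sup>+x. ennreal (hh a x u) \<partial>lborel) \<le>
        (\<integral>\<^sup>+x. ennreal u * (ennreal (x powr (-a)) * indicator {0..1} x) \<partial>lborel)"
    proof (rule nn_integral_mono)
      fix x
      show "ennreal (hh a x u) \<le> ennreal u * (ennreal (x powr (-a)) * indicator {0..1} x)"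
      proof (cases "0 < x \<and> x \<le> 1")
        case True
        have "u * x powr (-a) / (1+x*u) \<le> u * x powr (-a) / 1"
          using True u by (intro divide_left_mono) (auto intro: add_pos_nonneg)
        then show ?thesis using True u hh_eq[of x u a]
          by (simp add: ennreal_mult'[symmetric] indicator_def)
      next
        case False
        then show ?thesis by (auto simp: indicator_def hh_def)
      qed
    qed
    have eq: "(\<integral>\<^sup>+x. ennreal u * (ennreal (x powr (-a)) * indicator {0..1} x) \<partial>lborel)
       = ennreal u * ennreal (1 / (1-a))"
      using assms by (subst nn_integral_cmult) (auto simp: nn_pow0)
    have "u \<le> u powr a"
    proof -
      have "u powr 1 \<le> u powr a" using u True assms by (intro powr_mono') auto
      then show ?thesis using u by simp
    qed
    moreover have "1/(1-a) \<le> 1/(a*(1-a))" using assms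
      by (intro divide_left_mono mult_pos_pos) (auto intro: mult_left_le_one_le)
    ultimately have "u * (1/(1-a)) \<le> u powr a * (1/(a*(1-a)))"
      using assms u by (intro mult_mono) auto
    then have "ennreal u * ennreal (1 / (1-a)) \<le> ennreal (u powr a / (a*(1-a)))"
      using u assms by (simp add: ennreal_mult'[symmetric] ennreal_leI)
    then show ?thesis using mono eq by simp
  next
    case False
    then have u1: "u > 1" by simp
    have mono: "(\<integral>\<^sup>+x. ennreal (hh a x u) \<partial>lborel) \<le>
        (\<integral>\<^sup>+x. ennreal u * (ennreal (x powr (-a)) * indicator {0..1/u} x)
              + ennreal (x powr (-1-a)) * indicator {1/u..1} x \<partial>lborel)"
    proof (rule nn_integral_mono)
      fix x
      show "ennreal (hh a x u) \<le> ennreal u * (ennreal (x powr (-a)) * indicator {0..1/u} x)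
              + ennreal (x powr (-1-a)) * indicator {1/u..1} x"
      proof (cases "0 < x \<and> x \<le> 1")
        case True
        show ?thesis
        proof (cases "x \<le> 1/u")
          case True2: True
          have "u * x powr (-a) / (1+x*u) \<le> u * x powr (-a) / 1"
            using True u by (intro divide_left_mono) (auto intro: add_pos_nonneg)
          then have "ennreal (hh a x u) \<le> ennreal u * (ennreal (x powr (-a)) * indicator {0..1/u} x)"
            using True True2 u hh_eq[of x u a]
            by (simp add: ennreal_mult'[symmetric] indicator_def)
          then show ?thesis by (rule order_trans) simp
        next
          case False2: False
          have "x * u > 1" using False2 u by (simp add: field_simps)
          have "u * x powr (-a) / (1+x*u) \<le> u * x powr (-a) / (x*u)"
            using True u \<open>x*u > 1\<close> by (intro divide_left_mono) auto
          also have "\<dots> = x powr (-1-a)"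
            using True u by (simp add: powr_diff powr_minus field_simps)
          finally have "ennreal (hh a x u) \<le> ennreal (x powr (-1-a)) * indicator {1/u..1} x"
            using True False2 u hh_eq[of x u a]
            by (simp add: ennreal_mult'[symmetric] indicator_def)
          then show ?thesis by (rule order_trans) simp
        qed
      next
        case False
        then show ?thesis by (auto simp: indicator_def hh_def)
      qed
    qed
    have eq: "(\<integral>\<^sup>+x. ennreal u * (ennreal (x powr (-a)) * indicator {0..1/u} x)
              + ennreal (x powr (-1-a)) * indicator {1/u..1} x \<partial>lborel)
       = ennreal u * ennreal ((1/u) powr (-a+1) / (-a+1)) +
         ennreal (1 powr (-1-a+1)/(-1-a+1) - (1/u) powr (-1-a+1)/(-1-a+1))"
      using assms u1 by (subst nn_integral_add) (auto simp: nn_integral_cmult nn_pow0 nn_powab)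
    have r1: "u * ((1/u) powr (-a+1) / (-a+1)) = u powr a / (1-a)"
    proof -
      have "(1/u) powr (-a+1) = u powr (a - 1)" using u
        by (simp add: powr_divide powr_minus_divide[symmetric] powr_minus) 
      moreover have "u * u powr (a-1) = u powr a" using u by (simp add: powr_diff)
      ultimately show ?thesis by simp
    qed
    have r2: "1 powr (-1-a+1)/(-1-a+1) - (1/u) powr (-1-a+1)/(-1-a+1) = (u powr a - 1) / a"
    proof -
      have "(1/u) powr (-a) = u powr a" using u
        by (simp add: powr_divide powr_minus_divide[symmetric] powr_minus) 
      then show ?thesis using assms by (simp add: field_simps)
    qed
    have "u powr a / (1-a) + (u powr a - 1)/a \<le> u powr a / (1-a) + u powr a / a"
      using assms by (simp add: divide_right_mono)
    also have "\<dots> = u powr a / (a*(1-a))" using assms by (simp add: field_simps)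
    finally have fin: "u powr a / (1-a) + (u powr a - 1)/a \<le> u powr a / (a*(1-a))" .
    have "(u powr a - 1)/a \<ge> 0" using assms u1 by (simp add: ge_one_powr_ge_zero)
    then have "ennreal u * ennreal ((1/u) powr (-a+1) / (-a+1)) +
         ennreal (1 powr (-1-a+1)/(-1-a+1) - (1/u) powr (-1-a+1)/(-1-a+1))
         = ennreal (u powr a / (1-a) + (u powr a - 1)/a)"
      using u assms r1 r2 by (simp add: ennreal_mult'[symmetric] ennreal_plus[symmetric] del: ennreal_plus)
    also have "\<dots> \<le> ennreal (u powr a / (a*(1-a)))" using fin by (rule ennreal_leI)
    finally show ?thesis using mono eq by simp
  qed
qed


locale PM =
  fixes M :: "real measure"
  assumes P: "prob_space M" and S: "sets M = sets borel" and N: "measure M {..<0} = 0"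
begin

lemma meas: assumes "f \<in> borel_measurable borel" shows "f \<in> borel_measurable M"
  using assms unfolding measurable_cong_sets[OF S refl] .

lemma fin: "finite_measure M" using P by (simp add: prob_space_def)

lemma AE_nonneg: "AE u in M. 0 \<le> u"
proof (rule AE_I')
  have "{..<0::real} \<in> sets M" using S by simp
  moreover have "emeasure M {..<0} = 0"
    using N by (simp add: finite_measure.emeasure_eq_measure[OF fin])
  ultimately show "{..<0::real} \<in> null_sets M" by auto
qed auto

lemma int_bdd:
  fixes f :: "real \<Rightarrow> real"
  assumes "f \<in> borel_measurable borel" "AE u in M. 0 \<le> u \<longrightarrow> \<bar>f u\<bar> \<le> 1"
  shows "integrable M f"
proof -
  have i: "integrable M (\<lambda>_. 1::real)" using fin by (simp add: finite_measure.integrable_const)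
  have m: "f \<in> borel_measurable M" using meas[OF assms(1)] .
  have ae: "AE x in M. norm (f x) \<le> norm (1::real)" using AE_nonneg assms(2) by eventually_elim auto
  show ?thesis by (rule Bochner_Integration.integrable_bound[OF i m ae])
qed

definition A :: "real \<Rightarrow> real" where "A x = (\<integral>u. x*u/(1+x*u) \<partial>M)"
definition D :: real where "D = (\<integral>u. 1/(1+u) \<partial>M)"

lemma b1: "0 \<le> (t::real) \<Longrightarrow> \<bar>t/(1+t)\<bar> \<le> 1" by (simp add: divide_le_eq_1)
lemma b2: "0 \<le> (t::real) \<Longrightarrow> \<bar>1/(1+t)\<bar> \<le> 1" by (simp add: divide_le_eq_1)

lemma intA: "0 \<le> x \<Longrightarrow> integrable M (\<lambda>u. x*u/(1+x*u))"
  apply (rule int_bdd)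
   apply simp
  apply (rule AE_I2)
  apply (intro impI b1 mult_nonneg_nonneg)
  by auto

lemma intB: "0 \<le> x \<Longrightarrow> integrable M (\<lambda>u. 1/(1+x*u))"
  apply (rule int_bdd)
   apply simp
  apply (rule AE_I2)
  apply (intro impI b2 mult_nonneg_nonneg)
  by auto

lemma A_nonneg: "0 \<le> x \<Longrightarrow> 0 \<le> A x"
  unfolding A_def by (rule integral_nonneg_AE) (use AE_nonneg in eventually_elim, auto)

lemma one_minus_A: "0 \<le> x \<Longrightarrow> 1 - A x = (\<integral>u. 1/(1+x*u) \<partial>M)"
proof -
  assume x: "0 \<le> x"
  have "(\<integral>u. 1/(1+x*u) \<partial>M) = (\<integral>u. 1 - x*u/(1+x*u) \<partial>M)"
  proof (rule integral_cong_AE)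
    show "AE u in M. 1/(1+x*u) = 1 - x*u/(1+x*u)" using AE_nonneg
    proof eventually_elim
      case (elim u)
      then have "0 < 1 + x*u" using x by (simp add: add_pos_nonneg)
      then show ?case by (simp add: field_simps)
    qed
  qed (auto intro: meas)
  also have "\<dots> = (\<integral>u. 1 \<partial>M) - A x" unfolding A_def
    by (rule Bochner_Integration.integral_diff[OF finite_measure.integrable_const[OF fin] intA[OF x]])
  also have "(\<integral>u. 1 \<partial>M) = (1::real)" using prob_space.prob_space[OF P] by simp
  finally show ?thesis by simp
qed

lemma D_pos: "0 < D"
proof -
  have i: "integrable M (\<lambda>u. 1/(1+u))" using intB[of 1] by simp
  have nn: "AE u in M. 0 \<le> 1/(1+u)" using AE_nonneg by eventually_elim auto
  have "D \<ge> 0" unfolding D_def by (rule integral_nonneg_AE[OF nn])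
  moreover have "D \<noteq> 0"
  proof
    assume "D = 0"
    then have "AE u in M. 1/(1+u) = 0" using integral_nonneg_eq_0_iff_AE[OF i nn] by (simp add: D_def)
    then have "AE u in M. False" using AE_nonneg by eventually_elim auto
    then show False using P by (simp add: prob_space.AE_False)
  qed
  ultimately show ?thesis by simp
qed

lemma one_minus_A_ge: "0 \<le> x \<Longrightarrow> x \<le> 1 \<Longrightarrow> D \<le> 1 - A x"
proof -
  assume x: "0 \<le> x" "x \<le> 1"
  have "D \<le> (\<integral>u. 1/(1+x*u) \<partial>M)" unfolding D_def
  proof (rule integral_mono_AE)
    show "integrable M (\<lambda>u. 1/(1+u))" using intB[of 1] by simp
    show "integrable M (\<lambda>u. 1/(1+x*u))" using intB x by simp
    show "AE u in M. 1/(1+u) \<le> 1/(1+x*u)" using AE_nonneg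
    proof eventually_elim
      case (elim u)
      then have "x*u \<le> u" using x by (simp add: mult_left_le_one_le)
      moreover have "0 \<le> x*u" using elim x by simp
      ultimately show ?case using elim x by (intro divide_left_mono mult_pos_pos) (auto intro: add_pos_nonneg)
    qed
  qed
  then show ?thesis using one_minus_A x by simp
qed

lemma psi_eq: "psi M (- complex_of_real x) = complex_of_real (- A x)"
proof -
  have "psi M (- complex_of_real x) = (\<integral>u. complex_of_real (- (x*u/(1+x*u))) \<partial>M)"
    unfolding psi_def by (rule Bochner_Integration.integral_cong) simp_all
  also have "\<dots> = complex_of_real (\<integral>u. -(x*u/(1+x*u)) \<partial>M)" by (rule integral_complex_of_real)
  also have "\<dots> = complex_of_real (- A x)" by (simp only: integral_minus A_def)
  finally show ?thesis .
qed

lemma K_eq: "- Re (Kfun M (- complex_of_real x)) = A x / (1 - A x)"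
proof -
  have "Kfun M (- complex_of_real x) = complex_of_real (- A x / (1 - A x))"
    unfolding Kfun_def psi_eq by simp
  then show ?thesis by simp
qed

end

context PM begin

lemma sets_pair1: "sets (lborel \<Otimes>\<^sub>M M) = sets (borel \<Otimes>\<^sub>M borel)"
  by (rule sets_pair_measure_cong) (simp_all add: S)
lemma sets_pair2: "sets (M \<Otimes>\<^sub>M lborel) = sets (borel \<Otimes>\<^sub>M borel)"
  by (rule sets_pair_measure_cong) (simp_all add: S)

lemma mh: "case_prod (\<lambda>x u. ennreal (hh a x u)) \<in> borel_measurable (lborel \<Otimes>\<^sub>M M)"
  unfolding measurable_cong_sets[OF sets_pair1 refl] hh_def by measurable

lemma mh2: "case_prod (\<lambda>u x. ennreal (hh a x u)) \<in> borel_measurable (M \<Otimes>\<^sub>M lborel)"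
  unfolding measurable_cong_sets[OF sets_pair2 refl] hh_def by measurable

lemma sfM: "sigma_finite_measure M"
proof -
  interpret prob_space M by (rule P)
  show ?thesis by unfold_locales
qed

lemma mG: "(\<lambda>u. \<integral>\<^sup>+x. ennreal (hh a x u) \<partial>lborel) \<in> borel_measurable M"
  using lborel.borel_measurable_nn_integral[OF mh2] .

lemma mEJ: "(\<lambda>x. \<integral>\<^sup>+u. ennreal (hh a x u) \<partial>M) \<in> borel_measurable lborel"
  using sigma_finite_measure.borel_measurable_nn_integral[OF sfM mh] .

lemma EJ: "ennreal (indicator {0<..1} x * A x / x powr (1+a)) = (\<integral>\<^sup>+u. ennreal (hh a x u) \<partial>M)"
proof (cases "x \<in> {0<..1}")
  case False
  then show ?thesis by (simp add: hh_def)
next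
  case True
  define c where "c = 1 / x powr (1+a)"
  have c: "c > 0" using True by (simp add: c_def)
  have "(\<integral>\<^sup>+u. ennreal (hh a x u) \<partial>M) = (\<integral>\<^sup>+u. ennreal (x*u/(1+x*u)) * ennreal c \<partial>M)"
    using True c by (intro nn_integral_cong) (simp add: hh_def c_def ennreal_mult''[symmetric])
  also have "\<dots> = (\<integral>\<^sup>+u. ennreal (x*u/(1+x*u)) \<partial>M) * ennreal c"
    by (rule nn_integral_multc) (rule meas, measurable)
  also have "(\<integral>\<^sup>+u. ennreal (x*u/(1+x*u)) \<partial>M) = ennreal (A x)"
    unfolding A_def
  proof (rule nn_integral_eq_integral)
    show "integrable M (\<lambda>u. x*u/(1+x*u))" using True by (intro intA) simp
    show "AE u in M. 0 \<le> x*u/(1+x*u)" using AE_nonneg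
      by eventually_elim (use True in \<open>auto intro!: divide_nonneg_nonneg add_nonneg_nonneg\<close>)
  qed
  finally show ?thesis using True c A_nonneg[of x]
    by (simp add: c_def ennreal_mult''[symmetric] divide_inverse)
qed

lemma Tonelli: "(\<integral>\<^sup>+x. ennreal (indicator {0<..1} x * A x / x powr (1+a)) \<partial>lborel)
   = (\<integral>\<^sup>+u. (\<integral>\<^sup>+x. ennreal (hh a x u) \<partial>lborel) \<partial>M)"
proof -
  interpret pair_sigma_finite lborel M
    by (simp add: pair_sigma_finite_def lborel.sigma_finite_measure_axioms sfM)
  have "(\<integral>\<^sup>+x. ennreal (indicator {0<..1} x * A x / x powr (1+a)) \<partial>lborel)
      = (\<integral>\<^sup>+x. (\<integral>\<^sup>+u. ennreal (hh a x u) \<partial>M) \<partial>lborel)"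
    by (simp add: EJ)
  also have "\<dots> = (\<integral>\<^sup>+u. (\<integral>\<^sup>+x. ennreal (hh a x u) \<partial>lborel) \<partial>M)"
    by (rule Fubini'[symmetric]) (rule mh)
  finally show ?thesis .
qed

lemma cmu_eq: "cmu M = 1 / D" by (simp add: cmu_def D_def)

lemma ptw:
  assumes "0 < x" "x \<le> 1"
  shows "A x / x powr (1+a) \<le> (A x / (1 - A x)) / x powr (1+a)"
    and "(A x / (1 - A x)) / x powr (1+a) \<le> cmu M * (A x / x powr (1+a))"
proof -
  have A0: "0 \<le> A x" using A_nonneg assms by simp
  have AD: "D \<le> 1 - A x" using one_minus_A_ge assms by simp
  have p: "x powr (1+a) > 0" using assms by simp
  have pos: "1 - A x > 0" using AD D_pos by linarith
  have "A x * (1 - A x) \<le> A x" using A0 pos by (intro mult_right_le_one_le) auto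
  then have "A x \<le> A x / (1 - A x)" using pos by (simp add: le_divide_eq)
  then show "A x / x powr (1+a) \<le> (A x / (1 - A x)) / x powr (1+a)" using p
    by (intro divide_right_mono) auto
  have "A x / (1 - A x) \<le> A x / D" using A0 AD D_pos by (intro divide_left_mono mult_pos_pos) auto
  then have "(A x / (1 - A x)) / x powr (1+a) \<le> (A x / D) / x powr (1+a)" using p
    by (intro divide_right_mono) auto
  also have "\<dots> = cmu M * (A x / x powr (1+a))" by (simp add: cmu_eq)
  finally show "(A x / (1 - A x)) / x powr (1+a) \<le> cmu M * (A x / x powr (1+a))" .
qed

theorem main:
  assumes a: "0 < a" "a < 1"
  shows "(ennreal (1/2) * (moment M a - (\<integral>\<^sup>+ u. ennreal (indicator {0<..<1} u * u powr a) \<partial>M))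
           \<le> ennreal (1 - a) * (\<integral>\<^sup>+ x. ennreal (indicator {0<..1} x * (- Re (Kfun M (- complex_of_real x)) / x powr (1 + a))) \<partial>lborel)) \<and>
         (ennreal (1 - a) * (\<integral>\<^sup>+ x. ennreal (indicator {0<..1} x * (- Re (Kfun M (- complex_of_real x)) / x powr (1 + a))) \<partial>lborel)
           \<le> ennreal (cmu M / a) * moment M a) \<and>
         (moment M a < \<infinity> \<longleftrightarrow>
           (\<integral>\<^sup>+ x. ennreal (indicator {0<..1} x * (- Re (Kfun M (- complex_of_real x)) / x powr (1 + a))) \<partial>lborel) < \<infinity>)"
proof -
  define I where "I = (\<integral>\<^sup>+ x. ennreal (indicator {0<..1} x * (- Re (Kfun M (- complex_of_real x)) / x powr (1 + a))) \<partial>lborel)"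
  define J where "J = (\<integral>\<^sup>+x. ennreal (indicator {0<..1} x * A x / x powr (1+a)) \<partial>lborel)"
  define G where "G = (\<lambda>u. \<integral>\<^sup>+x. ennreal (hh a x u) \<partial>lborel)"
  define m where "m = moment M a"
  define Pm where "Pm = (\<integral>\<^sup>+ u. ennreal (indicator {0<..<1} u * u powr a) \<partial>M)"
  define Q where "Q = (\<integral>\<^sup>+ u. ennreal (indicator {1..} u * u powr a) \<partial>M)"
  have cmu0: "cmu M \<ge> 0" using D_pos by (simp add: cmu_eq)
  have JG: "J = (\<integral>\<^sup>+u. G u \<partial>M)" unfolding J_def G_def by (rule Tonelli)
  have mJ: "(\<lambda>x. ennreal (indicator {0<..1} x * A x / x powr (1+a))) \<in> borel_measurable lborel"
    using mEJ[of a] by (subst (asm) EJ[symmetric])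
  have JI: "J \<le> I" unfolding J_def I_def
  proof (rule nn_integral_mono)
    fix x show "ennreal (indicator {0<..1} x * A x / x powr (1+a))
        \<le> ennreal (indicator {0<..1} x * (- Re (Kfun M (- complex_of_real x)) / x powr (1 + a)))"
      using ptw(1)[of x] by (cases "x \<in> {0<..1}") (auto simp: K_eq intro: ennreal_leI)
  qed
  have IJ: "I \<le> ennreal (cmu M) * J"
  proof -
    have "I \<le> (\<integral>\<^sup>+x. ennreal (cmu M) * ennreal (indicator {0<..1} x * A x / x powr (1+a)) \<partial>lborel)"
      unfolding I_def
    proof (rule nn_integral_mono)
      fix x show "ennreal (indicator {0<..1} x * (- Re (Kfun M (- complex_of_real x)) / x powr (1 + a)))
         \<le> ennreal (cmu M) * ennreal (indicator {0<..1} x * A x / x powr (1+a))"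
      proof (cases "x \<in> {0<..1}")
        case True
        have nn: "0 \<le> A x / x powr (1+a)" using True A_nonneg[of x] by simp
        have "ennreal ((A x / (1 - A x)) / x powr (1+a)) \<le> ennreal (cmu M * (A x / x powr (1+a)))"
          using ptw(2)[of x] True by (intro ennreal_leI) auto
        also have "\<dots> = ennreal (cmu M) * ennreal (A x / x powr (1+a))"
          using cmu0 nn by (rule ennreal_mult)
        finally show ?thesis using True by (simp add: K_eq)
      qed simp
    qed
    also have "\<dots> = ennreal (cmu M) * J" unfolding J_def by (rule nn_integral_cmult[OF mJ])
    finally show ?thesis .
  qed
  have AE0: "AE u in M. 0 \<le> u" by (rule AE_nonneg)
  have mpow: "(\<lambda>u. ennreal (u powr a)) \<in> borel_measurable M" by (rule meas) measurable
  have mP: "(\<lambda>u. ennreal (indicator {0<..<1} u * u powr a)) \<in> borel_measurable M" by (rule meas) measurable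
  have mQ: "(\<lambda>u. ennreal (indicator {1..} u * u powr a)) \<in> borel_measurable M" by (rule meas) measurable
  have mPQ: "m = Pm + Q"
  proof -
    have "m = (\<integral>\<^sup>+u. ennreal (indicator {0<..<1} u * u powr a) + ennreal (indicator {1..} u * u powr a) \<partial>M)"
      unfolding m_def moment_def
    proof (rule nn_integral_cong_AE)
      show "AE u in M. ennreal (u powr a) = ennreal (indicator {0<..<1} u * u powr a) + ennreal (indicator {1..} u * u powr a)"
        using AE0 by eventually_elim (auto simp: indicator_def)
    qed
    also have "\<dots> = Pm + Q" unfolding Pm_def Q_def by (rule nn_integral_add[OF mP mQ])
    finally show ?thesis .
  qed
  have Pfin: "Pm < \<infinity>"
  proof -
    have "Pm \<le> (\<integral>\<^sup>+u. 1 \<partial>M)" unfolding Pm_def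
    proof (rule nn_integral_mono)
      fix u show "ennreal (indicator {0<..<1} u * u powr a) \<le> 1"
        using a by (cases "u \<in> {0<..<1}") (auto simp: powr_le1)
    qed
    also have "\<dots> = 1" using prob_space.emeasure_space_1[OF P] by simp
    finally show ?thesis by (simp add: order_le_less_trans)
  qed
  have QJ: "Q \<le> ennreal (2*(1-a)) * J"
  proof -
    have "Q \<le> (\<integral>\<^sup>+u. ennreal (2*(1-a)) * G u \<partial>M)" unfolding Q_def
    proof (rule nn_integral_mono)
      fix u show "ennreal (indicator {1..} u * u powr a) \<le> ennreal (2*(1-a)) * G u"
      proof (cases "1 \<le> u")
        case True
        have "ennreal (u powr a) = ennreal (2*(1-a)) * ennreal (u powr a / (2*(1-a)))"
          using a by (simp add: ennreal_mult[symmetric])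
        also have "\<dots> \<le> ennreal (2*(1-a)) * G u" unfolding G_def
          by (rule mult_left_mono) (use G_lower[OF True a] in auto)
        finally show ?thesis using True by simp
      qed simp
    qed
    also have "\<dots> = ennreal (2*(1-a)) * J" unfolding JG G_def by (rule nn_integral_cmult[OF mG])
    finally show ?thesis .
  qed
  have part1: "ennreal (1/2) * (m - Pm) \<le> ennreal (1-a) * I"
  proof -
    have "m - Pm = Q" using mPQ Pfin by simp
    then have "ennreal (1/2) * (m - Pm) \<le> ennreal (1/2) * (ennreal (2*(1-a)) * J)"
      using QJ by (simp add: mult_left_mono)
    also have "\<dots> = ennreal (1-a) * J"
    proof -
      have e: "ennreal (1/2) * ennreal (2*(1-a)) = ennreal (1-a)" using a
        by (subst ennreal_mult[symmetric]) auto
      show ?thesis by (simp only: mult.assoc[symmetric] e)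
    qed
    also have "\<dots> \<le> ennreal (1-a) * I" using JI by (simp add: mult_left_mono)
    finally show ?thesis .
  qed
  have Jm: "J \<le> ennreal (1/(a*(1-a))) * m"
  proof -
    have "J \<le> (\<integral>\<^sup>+u. ennreal (1/(a*(1-a))) * ennreal (u powr a) \<partial>M)" unfolding JG
    proof (rule nn_integral_mono_AE)
      show "AE u in M. G u \<le> ennreal (1/(a*(1-a))) * ennreal (u powr a)"
        using AE0
      proof eventually_elim
        case (elim u)
        have "G u \<le> ennreal (u powr a / (a*(1-a)))" unfolding G_def by (rule G_upper[OF elim a])
        also have "\<dots> = ennreal (1/(a*(1-a))) * ennreal (u powr a)"
          using a by (simp add: ennreal_mult[symmetric])
        finally show ?case .
      qed
    qed
    also have "\<dots> = ennreal (1/(a*(1-a))) * m" unfolding m_def moment_def by (rule nn_integral_cmult[OF mpow])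
    finally show ?thesis .
  qed
  have part2: "ennreal (1-a) * I \<le> ennreal (cmu M / a) * m"
  proof -
    have "ennreal (1-a) * I \<le> ennreal (1-a) * (ennreal (cmu M) * (ennreal (1/(a*(1-a))) * m))"
      using IJ Jm by (intro mult_left_mono order_trans[OF IJ] ) auto
    also have "\<dots> = ennreal (cmu M / a) * m"
    proof -
      have e1: "ennreal (1-a) * ennreal (cmu M) = ennreal ((1-a) * cmu M)"
        using a cmu0 by (intro ennreal_mult[symmetric]) auto
      have e2: "ennreal ((1-a)*cmu M) * ennreal (1/(a*(1-a))) = ennreal ((1-a)*cmu M*(1/(a*(1-a))))"
        using a cmu0 by (intro ennreal_mult[symmetric]) auto
      have e3: "(1-a)*cmu M*(1/(a*(1-a))) = cmu M / a" using a by (simp add: field_simps)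
      show ?thesis by (simp only: mult.assoc[symmetric] e1 e2 e3)
    qed
    finally show ?thesis .
  qed
  have part3: "m < \<infinity> \<longleftrightarrow> I < \<infinity>"
  proof
    assume "m < \<infinity>"
    then have "ennreal (cmu M / a) * m < \<infinity>" by (simp add: ennreal_mult_less_top)
    with part2 have "ennreal (1-a) * I < \<infinity>" by (rule le_less_trans)
    then have "I = 0 \<or> I < \<infinity>" using a by (simp add: ennreal_mult_less_top)
    then show "I < \<infinity>" by (auto simp: top.not_eq_extremum)
  next
    assume "I < \<infinity>"
    then have "ennreal (1-a) * I < \<infinity>" by (simp add: ennreal_mult_less_top)
    then have "ennreal (1/2) * (m - Pm) < \<infinity>" using part1 by (rule le_less_trans[rotated])
    then have "m - Pm = 0 \<or> m - Pm < \<infinity>" by (auto simp: ennreal_mult_less_top)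
    then have "m - Pm < \<infinity>" by (auto simp: top.not_eq_extremum)
    then have "Q < \<infinity>" using mPQ Pfin by simp
    then show "m < \<infinity>" using mPQ Pfin by simp
  qed
  show ?thesis using part1 part2 part3 unfolding I_def m_def Pm_def by simp
qed

end

theorem proposition4p2:
  fixes M :: "real measure" and \<alpha> :: real
  assumes "prob_space M" and "sets M = sets borel"
    and "measure M {..<0} = 0"
    and "measure M {0} < 1"
    and "0 < \<alpha>" and "\<alpha> < 1"
  shows "(ennreal (1/2) * (moment M \<alpha> - (\<integral>\<^sup>+ u. ennreal (indicator {0<..<1} u * u powr \<alpha>) \<partial>M))
           \<le> ennreal (1 - \<alpha>) * (\<integral>\<^sup>+ x. ennreal (indicator {0<..1} x * (- Re (Kfun M (- complex_of_real x)) / x powr (1 + \<alpha>))) \<partial>lborel)) \<and>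
         (ennreal (1 - \<alpha>) * (\<integral>\<^sup>+ x. ennreal (indicator {0<..1} x * (- Re (Kfun M (- complex_of_real x)) / x powr (1 + \<alpha>))) \<partial>lborel)
           \<le> ennreal (cmu M / \<alpha>) * moment M \<alpha>) \<and>
         (moment M \<alpha> < \<infinity> \<longleftrightarrow>
           (\<integral>\<^sup>+ x. ennreal (indicator {0<..1} x * (- Re (Kfun M (- complex_of_real x)) / x powr (1 + \<alpha>))) \<partial>lborel) < \<infinity>)"
proof -
  have "PM M" using assms(1-3) by (simp add: PM_def)
  then show ?thesis using PM.main[of M \<alpha>] assms(5,6) by blast
qed

end
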